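(* Let $m,n>0$, let $f$ and $g$ be concave positive real functions on $[0,m]$ and $[0,n]$ respectively, and let $A=\{(x,y): 0\le x\le m,\ 0\le y\le f(x)\}$ and $B=\{(x,y): 0\le x\le n,\ 0\le y\le g(x)\}$. If $C=m\left(\frac{|A|}{m^2}-\frac{|B|}{n^2}\right)\ge 0$ and $f(x)=\frac{m}{n}g(\frac{n}{m}x)+C$ for all $x\in[0,m]$, then $$|A+B|=\left(\frac{|A|}{m}+\frac{|B|}{n}\right)(m+n).$$
   Context: $|X|$ denotes area; $A+B$ is the Minkowski sum. *)

theory Defs
  imports "HOL-Analysis.Analysis"
begin

definition minkowski_sum :: "(real \<times> real) set \<Rightarrow> (real \<times> real) set \<Rightarrow> (real \<times> real) set" where
  "minkowski_sum A B = {a + b | a b. a \<in> A \<and> b \<in> B}"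

definition area :: "(real \<times> real) set \<Rightarrow> real" where
  "area X = measure lebesgue X"

end

theory Submission
  imports Defs
begin

lemma scale_set:
  fixes s a :: real and g :: "real \<Rightarrow> real"
  assumes "s > 0"
  shows "(\<lambda>p. s *\<^sub>R p) ` {(x,y). 0\<le>x \<and> x\<le>a \<and> 0\<le>y \<and> y\<le>g x}
       = {(x,y). 0\<le>x \<and> x\<le>s*a \<and> 0\<le>y \<and> y\<le> s * g (x/s)}"
proof (rule set_eqI, rule iffI)
  fix p assume "p \<in> (\<lambda>p. s *\<^sub>R p) ` {(x,y). 0\<le>x \<and> x\<le>a \<and> 0\<le>y \<and> y\<le>g x}"
  then obtain x y where "p = (s*x, s*y)" "0\<le>x" "x\<le>a" "0\<le>y" "y\<le>g x" by force
  then show "p \<in> {(x,y). 0\<le>x \<and> x\<le>s*a \<and> 0\<le>y \<and> y\<le> s * g (x/s)}"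
    using assms by auto
next
  fix p assume "p \<in> {(x,y). 0\<le>x \<and> x\<le>s*a \<and> 0\<le>y \<and> y\<le> s * g (x/s)}"
  then obtain x y where p: "p = (x,y)" "0\<le>x" "x\<le>s*a" "0\<le>y" "y\<le> s * g (x/s)" by auto
  have "p = s *\<^sub>R (x/s, y/s)" using p assms by auto
  moreover have "(x/s, y/s) \<in> {(x,y). 0\<le>x \<and> x\<le>a \<and> 0\<le>y \<and> y\<le>g x}"
    using p assms by (auto simp: field_simps)
  ultimately show "p \<in> (\<lambda>p. s *\<^sub>R p) ` {(x,y). 0\<le>x \<and> x\<le>a \<and> 0\<le>y \<and> y\<le>g x}" by blast
qed

lemma shift_area:
  fixes a C :: real and h :: "real \<Rightarrow> real"
  assumes "a \<ge> 0" "C \<ge> 0" "\<And>x. x \<in> {0..a} \<Longrightarrow> h x \<ge> 0"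
    and X: "{(x,y). 0\<le>x \<and> x\<le>a \<and> 0\<le>y \<and> y\<le>h x} \<in> lmeasurable"
  shows "{(x,y). 0\<le>x \<and> x\<le>a \<and> 0\<le>y \<and> y\<le>h x + C} \<in> lmeasurable"
    "measure lebesgue {(x,y). 0\<le>x \<and> x\<le>a \<and> 0\<le>y \<and> y\<le>h x + C}
      = measure lebesgue {(x,y). 0\<le>x \<and> x\<le>a \<and> 0\<le>y \<and> y\<le>h x} + a * C"
proof -
  define X where "X = {(x,y). 0\<le>x \<and> x\<le>a \<and> 0\<le>y \<and> y\<le>h x}"
  define T where "T = (+) (0::real, C) ` X"
  define R where "R = cbox (0::real,0::real) (a, C)"
  have eq: "{(x,y). 0\<le>x \<and> x\<le>a \<and> 0\<le>y \<and> y\<le>h x + C} = T \<union> R"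
  proof (rule set_eqI, rule iffI)
    fix p assume "p \<in> {(x,y). 0\<le>x \<and> x\<le>a \<and> 0\<le>y \<and> y\<le>h x + C}"
    then obtain x y where p: "p = (x,y)" "0\<le>x" "x\<le>a" "0\<le>y" "y\<le>h x + C" by auto
    show "p \<in> T \<union> R"
    proof (cases "y \<le> C")
      case True then show ?thesis using p by (auto simp: R_def cbox_Pair_iff)
    next
      case False
      then have "(x, y - C) \<in> X" using p by (auto simp: X_def)
      moreover have "p = (0, C) + (x, y - C)" using p by auto
      ultimately show ?thesis unfolding T_def by blast
    qed
  next
    fix p assume "p \<in> T \<union> R"
    then show "p \<in> {(x,y). 0\<le>x \<and> x\<le>a \<and> 0\<le>y \<and> y\<le>h x + C}"
      using assms(2,3) by (force simp: T_def R_def X_def cbox_Pair_iff)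
  qed
  have XL: "X \<in> lmeasurable" using X by (simp add: X_def)
  have TL: "T \<in> lmeasurable" unfolding T_def by (rule measurable_translation[OF XL])
  have RL: "R \<in> lmeasurable" by (simp add: R_def)
  have "T \<inter> R \<subseteq> cbox (0,C) (a,C)"
    by (auto simp: T_def R_def X_def cbox_Pair_iff)
  moreover have "negligible (cbox (0::real,C) (a,C))"
    unfolding negligible_interval(1) by (auto simp: box_eq_empty Basis_prod_def)
  ultimately have neg: "negligible (T \<inter> R)" by (rule negligible_subset[rotated])
  show "{(x,y). 0\<le>x \<and> x\<le>a \<and> 0\<le>y \<and> y\<le>h x + C} \<in> lmeasurable"
    unfolding eq using TL RL by blast
  have mR: "measure lebesgue R = a * C"
    using assms by (simp add: R_def content_Pair)
  have "measure lebesgue (T \<union> R) = measure lebesgue T + measure lebesgue R - measure lebesgue (T \<inter> R)"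
    using TL RL by (rule measure_Un3)
  also have "measure lebesgue (T \<inter> R) = 0" using neg by (rule negligible_imp_measure0)
  also have "measure lebesgue T = measure lebesgue X" unfolding T_def by (rule measure_translation)
  finally show "measure lebesgue {(x,y). 0\<le>x \<and> x\<le>a \<and> 0\<le>y \<and> y\<le>h x + C}
      = measure lebesgue {(x,y). 0\<le>x \<and> x\<le>a \<and> 0\<le>y \<and> y\<le>h x} + a * C"
    unfolding eq X_def[symmetric] mR by simp
qed


lemma convex_region:
  fixes a :: real and h :: "real \<Rightarrow> real"
  assumes "concave_on {0..a} h"
  shows "convex {(x,y). 0\<le>x \<and> x\<le>a \<and> 0\<le>y \<and> y\<le>h x}"
  unfolding convex_alt
proof (intro ballI allI impI)
  fix p q :: "real \<times> real" and u :: real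
  assume p: "p \<in> {(x,y). 0\<le>x \<and> x\<le>a \<and> 0\<le>y \<and> y\<le>h x}"
    and q: "q \<in> {(x,y). 0\<le>x \<and> x\<le>a \<and> 0\<le>y \<and> y\<le>h x}" and u: "0 \<le> u \<and> u \<le> 1"
  obtain x1 y1 where p1: "p = (x1,y1)" "0\<le>x1" "x1\<le>a" "0\<le>y1" "y1\<le>h x1" using p by auto
  obtain x2 y2 where q1: "q = (x2,y2)" "0\<le>x2" "x2\<le>a" "0\<le>y2" "y2\<le>h x2" using q by auto
  have c: "h ((1-u) *\<^sub>R x1 + u *\<^sub>R x2) \<ge> (1-u) * h x1 + u * h x2"
    using concave_onD[OF assms, of u x1 x2] u p1 q1 by auto
  have "(1-u)*y1 + u*y2 \<le> (1-u) * h x1 + u * h x2"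
    using u p1 q1 by (intro add_mono mult_left_mono) auto
  have "(1-u)*x1 + u*x2 \<le> (1-u)*a + u*a"
    using u p1 q1 by (intro add_mono mult_left_mono) auto
  moreover have "0 \<le> (1-u)*x1 + u*x2" "0 \<le> (1-u)*y1 + u*y2" using u p1 q1 by auto
  ultimately show "(1 - u) *\<^sub>R p + u *\<^sub>R q \<in> {(x,y). 0\<le>x \<and> x\<le>a \<and> 0\<le>y \<and> y\<le>h x}"
    using c p1 q1 \<open>(1-u)*y1 + u*y2 \<le> _\<close> by (auto simp: algebra_simps)
qed

lemma bounded_region:
  fixes a :: real and h :: "real \<Rightarrow> real"
  assumes "concave_on {0..a} h" "\<And>x. x \<in> {0..a} \<Longrightarrow> h x > 0" "a \<ge> 0"
  shows "bounded {(x,y). 0\<le>x \<and> x\<le>a \<and> 0\<le>y \<and> y\<le>h x}"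
proof -
  have "{(x,y). 0\<le>x \<and> x\<le>a \<and> 0\<le>y \<and> y\<le>h x} \<subseteq> cbox (0,0) (a, 2 * h (a/2))"
  proof
    fix p assume "p \<in> {(x,y). 0\<le>x \<and> x\<le>a \<and> 0\<le>y \<and> y\<le>h x}"
    then obtain x y where p: "p = (x,y)" and xy: "0\<le>x" "x\<le>a" "0\<le>y" "y\<le>h x" by auto
    define r :: real where "r = 1/2"
    have c: "h ((1 - r) *\<^sub>R x + r *\<^sub>R (a - x)) \<ge> (1-r) * h x + r * h (a-x)"
      by (rule concave_onD[OF assms(1)]) (use xy in \<open>auto simp: r_def\<close>)
    have e: "(1 - r) *\<^sub>R x + r *\<^sub>R (a - x) = a/2" by (simp add: r_def field_simps)
    have c2: "h (a/2) \<ge> (1-r) * h x + r * h (a-x)" using c unfolding e .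
    moreover have "h (a-x) > 0" using assms(2) xy by auto
    ultimately have "h x \<le> 2 * h (a/2)" by (auto simp: r_def)
    then show "p \<in> cbox (0,0) (a, 2 * h (a/2))" using xy p by auto
  qed
  then show ?thesis using bounded_cbox bounded_subset by blast
qed

lemma key_ineq:
  fixes n t z1 z2 :: real and g :: "real \<Rightarrow> real"
  assumes "concave_on {0..n} g" "t > 0" "z1 \<in> {0..n}" "z2 \<in> {0..n}"
  shows "t * g z1 + g z2 \<le> (1+t) * g ((t*z1 + z2)/(1+t))"
proof -
  define \<tau> where "\<tau> = t/(1+t)"
  have "g ((1-\<tau>) *\<^sub>R z2 + \<tau> *\<^sub>R z1) \<ge> (1-\<tau>) * g z2 + \<tau> * g z1"
    using concave_onD[OF assms(1), of \<tau> z2 z1] assms by (auto simp: \<tau>_def)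
  moreover have h1: "(1-\<tau>) = 1/(1+t)" using assms(2) by (simp add: \<tau>_def field_simps)
  moreover have "(1-\<tau>) *\<^sub>R z2 + \<tau> *\<^sub>R z1 = (t*z1 + z2)/(1+t)"
    unfolding h1 by (simp add: \<tau>_def add_divide_distrib)
  ultimately have "(1/(1+t)) * g z2 + (t/(1+t)) * g z1 \<le> g ((t*z1 + z2)/(1+t))"
    by (simp add: \<tau>_def)
  then have "(1+t) * ((1/(1+t)) * g z2 + (t/(1+t)) * g z1) \<le> (1+t) * g ((t*z1 + z2)/(1+t))"
    using assms(2) by (intro mult_left_mono) auto
  moreover have "(1+t) * ((1/(1+t)) * g z2 + (t/(1+t)) * g z1)
     = ((1+t)*(1/(1+t))) * g z2 + ((1+t)*(t/(1+t))) * g z1" by (simp only: distrib_left mult.assoc)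
  moreover have "(1+t)*(1/(1+t)) = 1" "(1+t)*(t/(1+t)) = t" using assms(2) by auto
  ultimately show ?thesis by simp
qed


theorem lemma4p4:
  fixes m n :: real and f g :: "real \<Rightarrow> real" and A B :: "(real \<times> real) set" and C :: real
  assumes "m > 0" and "n > 0"
    and "concave_on {0..m} f" and "\<And>x. x \<in> {0..m} \<Longrightarrow> f x > 0"
    and "concave_on {0..n} g" and "\<And>x. x \<in> {0..n} \<Longrightarrow> g x > 0"
    and "A = {(x, y). 0 \<le> x \<and> x \<le> m \<and> 0 \<le> y \<and> y \<le> f x}"
    and "B = {(x, y). 0 \<le> x \<and> x \<le> n \<and> 0 \<le> y \<and> y \<le> g x}"
    and "C = m * (area A / m\<^sup>2 - area B / n\<^sup>2)" and "C \<ge> 0"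
    and "\<And>x. x \<in> {0..m} \<Longrightarrow> f x = (m / n) * g ((n / m) * x) + C"
  shows "area (minkowski_sum A B) = (area A / m + area B / n) * (m + n)"
proof -
  note mpos = assms(1) and npos = assms(2) and gc = assms(5) and gpos = assms(6)
  define t where "t = m / n"
  define u where "u = 1 + t"
  have tpos: "t > 0" using mpos npos by (simp add: t_def)
  have upos: "u > 0" using tpos by (simp add: u_def)
  have tn: "t * n = m" using npos by (simp add: t_def)
  have un: "u * n = m + n" using npos by (simp add: u_def t_def field_simps)
  have BL: "B \<in> lmeasurable"
    unfolding assms(8)
    by (rule measurable_convex[OF convex_region[OF gc] bounded_region[OF gc gpos]]) (use npos in auto)
  have scaled: "{(x,y). 0\<le>x \<and> x\<le>s*n \<and> 0\<le>y \<and> y\<le> s * g (x/s) + C} \<in> lmeasurable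
      \<and> measure lebesgue {(x,y). 0\<le>x \<and> x\<le>s*n \<and> 0\<le>y \<and> y\<le> s * g (x/s) + C}
        = s\<^sup>2 * measure lebesgue B + s * n * C" if spos: "s > 0" for s
  proof -
    have img: "(\<lambda>p. s *\<^sub>R p) ` B = {(x,y). 0\<le>x \<and> x\<le>s*n \<and> 0\<le>y \<and> y\<le> s * g (x/s)}"
      unfolding assms(8) by (rule scale_set[OF spos])
    have cvB: "convex B" unfolding assms(8) by (rule convex_region[OF gc])
    have bdB: "bounded B" unfolding assms(8) by (rule bounded_region[OF gc gpos]) (use npos in auto)
    have L: "{(x,y). 0\<le>x \<and> x\<le>s*n \<and> 0\<le>y \<and> y\<le> s * g (x/s)} \<in> lmeasurable"
      unfolding img[symmetric] by (rule measurable_convex[OF convex_scaling[OF cvB] bounded_scaling[OF bdB]])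
    have M: "measure lebesgue {(x,y). 0\<le>x \<and> x\<le>s*n \<and> 0\<le>y \<and> y\<le> s * g (x/s)}
        = s\<^sup>2 * measure lebesgue B"
      using measure_lebesgue_affine[of s 0 B] spos unfolding img[symmetric] by (simp add: power2_eq_square)
    have nn: "\<And>x. x \<in> {0..s*n} \<Longrightarrow> s * g (x/s) \<ge> 0"
    proof -
      fix x assume "x \<in> {0..s*n}"
      then have "x/s \<in> {0..n}" using spos by (auto simp: field_simps)
      then show "s * g (x/s) \<ge> 0" using gpos spos by (simp add: less_imp_le)
    qed
    have sn: "s * n \<ge> 0" using spos npos by simp
    show ?thesis using shift_area[OF sn assms(10) nn L] M by simp
  qed
  have Aeq: "A = {(x,y). 0\<le>x \<and> x\<le>t*n \<and> 0\<le>y \<and> y\<le> t * g (x/t) + C}"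
  proof -
    have "\<And>x. x \<in> {0..m} \<Longrightarrow> f x = t * g (x/t) + C"
      using assms(11) by (simp add: t_def mult.commute)
    then show ?thesis unfolding assms(7) tn by auto
  qed
  have Seq: "minkowski_sum A B = {(x,y). 0\<le>x \<and> x\<le>u*n \<and> 0\<le>y \<and> y\<le> u * g (x/u) + C}"
  proof (rule set_eqI, rule iffI)
    fix p assume "p \<in> minkowski_sum A B"
    then obtain x1 y1 x2 y2 where p: "p = (x1 + x2, y1 + y2)"
      and a: "0\<le>x1" "x1\<le>t*n" "0\<le>y1" "y1\<le> t * g (x1/t) + C"
      and b: "0\<le>x2" "x2\<le>n" "0\<le>y2" "y2\<le> g x2"
      unfolding minkowski_sum_def Aeq assms(8) by auto
    have z1: "x1/t \<in> {0..n}" using a tpos by (auto simp: field_simps)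
    have z2: "x2 \<in> {0..n}" using b by auto
    have k: "t * g (x1/t) + g x2 \<le> (1+t) * g ((t*(x1/t) + x2)/(1+t))"
      by (rule key_ineq[OF gc tpos z1 z2])
    have "t*(x1/t) = x1" using tpos by simp
    then have k2: "t * g (x1/t) + g x2 \<le> u * g ((x1 + x2)/u)" using k by (simp add: u_def)
    have "x1 + x2 \<le> u * n" using a b tn un by linarith
    then show "p \<in> {(x,y). 0\<le>x \<and> x\<le>u*n \<and> 0\<le>y \<and> y\<le> u * g (x/u) + C}"
      using p a b k2 by auto
  next
    fix p assume "p \<in> {(x,y). 0\<le>x \<and> x\<le>u*n \<and> 0\<le>y \<and> y\<le> u * g (x/u) + C}"
    then obtain x y where p: "p = (x,y)" and xy: "0\<le>x" "x\<le>u*n" "0\<le>y" "y\<le> u * g (x/u) + C"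
      by auto
    define z where "z = x/u"
    have z: "0 \<le> z" "z \<le> n" using xy upos by (auto simp: z_def field_simps)
    have gz: "g z > 0" using gpos z by auto
    define y2 where "y2 = min y (g z)"
    define y1 where "y1 = y - y2"
    have "t*z + z = u*z" by (simp add: u_def algebra_simps)
    moreover have "u*z = x" using upos by (simp add: z_def)
    ultimately have xeq: "x = t*z + z" by simp
    have ybd: "y \<le> t * g z + g z + C" using xy by (simp add: z_def u_def algebra_simps)
    have tz: "t * z / t = z" using tpos by simp
    have tg: "t * g z \<ge> 0" using tpos gz by simp
    have y1b: "y1 \<le> t * g z + C" "0 \<le> y1"
      using ybd tg assms(10) by (auto simp: y1_def y2_def min_def)
    have "(t*z, y1) \<in> A"
      unfolding Aeq using z tpos y1b
      by (auto simp: tz y1_def y2_def mult_left_mono)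
    moreover have "(z, y2) \<in> B" unfolding assms(8) using z xy gz by (auto simp: y2_def)
    moreover have "p = (t*z, y1) + (z, y2)" using p xeq by (simp add: y1_def)
    ultimately show "p \<in> minkowski_sum A B" unfolding minkowski_sum_def by blast
  qed
  have hA: "area A = t\<^sup>2 * area B + t * n * C"
    using scaled[OF tpos] unfolding area_def Aeq by simp
  have hS: "area (minkowski_sum A B) = u\<^sup>2 * area B + u * n * C"
    using scaled[OF upos] unfolding area_def Seq by simp
  show ?thesis
    unfolding hS hA using mpos npos
    by (simp add: u_def t_def field_simps power2_eq_square)
qed

end
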